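(* Let $n$ and $k$ be positive integers such that $n \geq 3(n-k)$ and $n \geq k$. Then $$\left|\mathcal{K}_{k+1}(n+1)\right| = (n-k+1)\,\left|\mathcal{K}_{k}(n)\right|,$$ where $\mathcal{K}_k(n)$ denotes the set of linear chord diagrams of size $n$ in which every chord has length at least $k$.
   Context: A linear chord diagram of size $n$ is a partition of the set $\{1,2,\dots,2n\}$ into blocks of size two, called chords. For a chord $c=\{s_c,e_c\}$ with $s_c<e_c$, $s_c$ is its start point, $e_c$ its end point, and its length is $e_c-s_c$. For positive integers $k,n$, $\mathcal{K}_k(n)$ is the set of all linear chord diagrams of size $n$ such that every chord has length at least $k$. *)

theory Defs
  imports Main
begin

definition linear_chord_diagram :: "nat \<Rightarrow> nat set set \<Rightarrow> bool" where
  "linear_chord_diagram n D \<longleftrightarrow>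
     (\<forall>c\<in>D. card c = 2) \<and> \<Union>D = {1..2*n} \<and>
     (\<forall>c\<in>D. \<forall>c'\<in>D. c \<noteq> c' \<longrightarrow> c \<inter> c' = {})"

definition chord_length :: "nat set \<Rightarrow> nat" where
  "chord_length c = Max c - Min c"

definition K :: "nat \<Rightarrow> nat \<Rightarrow> nat set set set" where
  "K k n = {D. linear_chord_diagram n D \<and> (\<forall>c\<in>D. chord_length c \<ge> k)}"

end

theory Submission
  imports Defs
begin

definition pm :: "nat set \<Rightarrow> nat set set \<Rightarrow> bool" where
 "pm X D \<longleftrightarrow> (\<forall>c\<in>D. card c = 2) \<and> \<Union>D = X \<and> (\<forall>c\<in>D. \<forall>c'\<in>D. c \<noteq> c' \<longrightarrow> c \<inter> c' = {})"

lemma lcd_pm: "linear_chord_diagram n D = pm {1..2*n} D"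
  by (simp add: linear_chord_diagram_def pm_def)

lemma card2E: fixes c :: "nat set" assumes "card c = 2" obtains a b where "a < b" "c = {a,b}"
proof -
  obtain x y where xy: "c = {x,y}" "x \<noteq> y" using assms card_2_iff by metis
  show ?thesis
  proof (cases "x < y")
    case True thus ?thesis using that xy by simp
  next
    case False
    hence "y < x" using xy by simp
    moreover have "c = {y,x}" using xy by (simp add: insert_commute)
    ultimately show ?thesis using that by simp
  qed
qed

lemma pm_image:
  assumes "pm X D" "inj_on h X"
  shows "pm (h ` X) ((`) h ` D)"
proof -
  have sub: "c \<subseteq> X" if "c \<in> D" for c using assms(1) that unfolding pm_def by blast
  have "card (h ` c) = 2" if "c \<in> D" for c
    using card_image[OF inj_on_subset[OF assms(2) sub[OF that]]] assms(1) that unfolding pm_def by auto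
  moreover have "\<Union>((`) h ` D) = h ` X" using assms(1) unfolding pm_def by auto
  moreover have "h ` c \<inter> h ` c' = {}" if "c \<in> D" "c' \<in> D" "h ` c \<noteq> h ` c'" for c c'
  proof -
    have "c \<noteq> c'" using that by auto
    hence "c \<inter> c' = {}" using assms(1) that unfolding pm_def by auto
    thus ?thesis using inj_on_image_Int[OF assms(2) sub[OF that(1)] sub[OF that(2)]] by simp
  qed
  ultimately show ?thesis unfolding pm_def by blast
qed

lemma pm_remove: assumes "pm X D" "c \<in> D" shows "pm (X - c) (D - {c})"
  using assms unfolding pm_def by blast

lemma pm_insert: assumes "pm X D" "card c = 2" "c \<inter> X = {}" shows "pm (X \<union> c) (insert c D)"
proof -
  have "c \<noteq> {}" using assms(2) by auto
  hence "c \<notin> D" using assms unfolding pm_def by blast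
  thus ?thesis using assms unfolding pm_def by blast
qed

definition partner :: "nat set set \<Rightarrow> nat \<Rightarrow> nat" where "partner D x = (THE y. {x,y} \<in> D)"

lemma pm_neq: assumes "pm X D" "{x,y} \<in> D" shows "x \<noteq> y"
  using assms unfolding pm_def by (cases "x = y") auto

lemma pm_partner_eq: assumes "pm X D" "{x,y} \<in> D" shows "partner D x = y"
  unfolding partner_def
proof (rule the_equality)
  show "{x,y} \<in> D" by fact
  fix z assume z: "{x,z} \<in> D"
  have "{x,z} = {x,y}"
  proof (rule ccontr)
    assume "{x,z} \<noteq> {x,y}"
    hence "{x,z} \<inter> {x,y} = {}" using assms z unfolding pm_def by metis
    thus False by simp
  qed
  moreover have "x \<noteq> z" using pm_neq[OF assms(1) z] .
  ultimately show "z = y" by (auto simp: doubleton_eq_iff)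
qed

lemma pm_partner: assumes "pm X D" "x \<in> X" shows "{x, partner D x} \<in> D"
proof -
  obtain c where c: "c \<in> D" "x \<in> c" using assms unfolding pm_def by blast
  have "card c = 2" using assms c unfolding pm_def by auto
  then obtain a b where ab: "c = {a,b}" using card2E by metis
  obtain y where "c = {x,y}"
  proof (cases "x = a")
    case True thus ?thesis using ab that by simp
  next
    case False hence "x = b" using ab c by simp
    thus ?thesis using ab that[of a] by (simp add: insert_commute)
  qed
  thus ?thesis using pm_partner_eq[OF assms(1)] c by auto
qed

lemma cl2: "a < b \<Longrightarrow> chord_length {a,b} = b - a"
  by (simp add: chord_length_def max_def min_def)

lemma K_iff: "D \<in> K k n \<longleftrightarrow> pm {1..2*n} D \<and> (\<forall>a b. {a,b} \<in> D \<longrightarrow> a < b \<longrightarrow> k \<le> b - a)"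
proof
  assume "D \<in> K k n" thus "pm {1..2*n} D \<and> (\<forall>a b. {a,b} \<in> D \<longrightarrow> a < b \<longrightarrow> k \<le> b - a)"
    unfolding K_def lcd_pm using cl2 by fastforce
next
  assume A: "pm {1..2*n} D \<and> (\<forall>a b. {a,b} \<in> D \<longrightarrow> a < b \<longrightarrow> k \<le> b - a)"
  have "k \<le> chord_length c" if "c \<in> D" for c
  proof -
    have "card c = 2" using A that unfolding pm_def by auto
    then obtain a b where "a < b" "c = {a,b}" using card2E by metis
    thus ?thesis using A that cl2 by auto
  qed
  thus "D \<in> K k n" using A unfolding K_def lcd_pm by auto
qed

lemma K_partner:
  assumes "D \<in> K k n" "x \<in> {1..2*n}"
  shows "partner D x \<in> {1..2*n} \<and> partner D x \<noteq> x \<and> partner D (partner D x) = x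
     \<and> (x < partner D x \<longrightarrow> x + k \<le> partner D x) \<and> (partner D x < x \<longrightarrow> partner D x + k \<le> x)"
proof -
  have pm: "pm {1..2*n} D" and len: "\<forall>a b. {a,b} \<in> D \<longrightarrow> a < b \<longrightarrow> k \<le> b - a"
    using assms K_iff by auto
  have c: "{x, partner D x} \<in> D" using pm_partner[OF pm assms(2)] .
  have c': "{partner D x, x} \<in> D" using c by (simp add: insert_commute)
  have "partner D x \<in> \<Union>D" using c by blast
  hence "partner D x \<in> {1..2*n}" using pm unfolding pm_def by simp
  moreover have "partner D x \<noteq> x" using pm_neq[OF pm c] by simp
  moreover have "partner D (partner D x) = x" using pm_partner_eq[OF pm c'] .
  moreover have "x < partner D x \<longrightarrow> x + k \<le> partner D x" using len c by fastforce
  moreover have "partner D x < x \<longrightarrow> partner D x + k \<le> x" using len c' by fastforce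
  ultimately show ?thesis by blast
qed

lemma finite_K: "finite (K k n)"
proof -
  have "K k n \<subseteq> Pow (Pow {1..2*n})" unfolding K_def lcd_pm pm_def by auto
  thus ?thesis by (rule finite_subset) auto
qed


lemma ordered_eq: "(a::nat) < b \<Longrightarrow> x < y \<Longrightarrow> {a,b} = {x,y} \<Longrightarrow> a = x \<and> b = y"
  by (auto simp: doubleton_eq_iff)

lemma img_len:
  fixes h :: "nat \<Rightarrow> nat"
  assumes "pm A D" "\<forall>a b. {a,b}\<in>D \<longrightarrow> a<b \<longrightarrow> k \<le> b-a"
    "\<forall>x\<in>A. \<forall>y\<in>A. x<y \<longrightarrow> k \<le> y-x \<longrightarrow> h x < h y \<and> k' \<le> h y - h x"
  shows "\<forall>a b. {a,b} \<in> (`) h ` D \<longrightarrow> a<b \<longrightarrow> k' \<le> b - a"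
proof (intro allI impI)
  fix a b assume ab: "{a,b} \<in> (`) h ` D" "a < b"
  then obtain c where c: "c \<in> D" "{a,b} = h ` c" by blast
  have "card c = 2" using assms(1) c unfolding pm_def by auto
  then obtain x y where xy: "x < y" "c = {x,y}" using card2E by metis
  have "x \<in> A" "y \<in> A" using assms(1) c xy unfolding pm_def by auto
  moreover have "k \<le> y - x" using assms(2) c xy by auto
  ultimately have h: "h x < h y" "k' \<le> h y - h x" using assms(3) xy by auto
  have "{a,b} = {h x, h y}" using c xy by simp
  hence "a = h x \<and> b = h y" using ordered_eq[OF ab(2) h(1)] by simp
  thus "k' \<le> b - a" using h by simp
qed

lemma chords_sub: "pm X D \<Longrightarrow> c \<in> D \<Longrightarrow> c \<subseteq> X"
  unfolding pm_def by blast

lemma img_img: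
  assumes "pm X D" "\<And>x. x \<in> X \<Longrightarrow> g (f x) = x"
  shows "(`) g ` ((`) f ` D) = D"
proof -
  have "g ` f ` c = c" if "c \<in> D" for c
  proof -
    have "c \<subseteq> X" using chords_sub[OF assms(1) that] .
    hence "g ` f ` c = (\<lambda>x. x) ` c" unfolding image_image by (intro image_cong) (auto simp: assms(2))
    thus ?thesis by simp
  qed
  hence "(\<lambda>c. g ` f ` c) ` D = (\<lambda>c. c) ` D" by (intro image_cong) auto
  thus ?thesis by (simp add: image_image)
qed

lemma swap_back: "x \<in> D \<Longrightarrow> y \<in> D \<Longrightarrow> z \<notin> D \<Longrightarrow> insert x (insert y (insert z (D - {x} - {y}) - {z})) = D"
  by auto

lemma swap_fwd: "x \<notin> A \<Longrightarrow> y \<notin> A \<Longrightarrow> x \<noteq> y \<Longrightarrow> z \<in> A \<Longrightarrow> insert z (insert x (insert y (A - {z})) - {x, y}) = A"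
  by auto

locale S =
  fixes n m :: nat
  assumes m3: "3*m \<le> n" and npos: "0 < n"
begin

abbreviation "a0 \<equiv> 2*m+1"
abbreviation "t0 \<equiv> n+m+2"

definition rho :: "nat \<Rightarrow> nat" where
  "rho x = (if t0 < x then x - 2 else if a0 < x then x - 1 else x)"
definition sig :: "nat \<Rightarrow> nat" where
  "sig x = (if n+m+1 \<le> x then x+2 else if a0 \<le> x then x+1 else x)"
definition X0 :: "nat set" where "X0 = {1..2*(n+1)} - {a0,t0}"

lemma sig_rho: "x \<in> X0 \<Longrightarrow> sig (rho x) = x \<and> rho x \<in> {1..2*n}"
  using m3 npos unfolding rho_def sig_def X0_def by auto

lemma rho_sig: "y \<in> {1..2*n} \<Longrightarrow> rho (sig y) = y \<and> sig y \<in> X0"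
  using m3 npos unfolding rho_def sig_def X0_def by auto

lemma inj_rho: "inj_on rho X0" by (rule inj_on_inverseI[where g=sig]) (simp add: sig_rho)
lemma inj_sig: "inj_on sig {1..2*n}" by (rule inj_on_inverseI[where g=rho]) (simp add: rho_sig)
lemma rho_img: "rho ` X0 = {1..2*n}"
proof
  show "rho ` X0 \<subseteq> {1..2*n}" using sig_rho by blast
  show "{1..2*n} \<subseteq> rho ` X0"
  proof
    fix y assume "y \<in> {1..2*n}"
    thus "y \<in> rho ` X0" using rho_sig[of y] by (metis image_eqI)
  qed
qed
lemma sig_img: "sig ` {1..2*n} = X0"
proof
  show "sig ` {1..2*n} \<subseteq> X0" using rho_sig by blast
  show "X0 \<subseteq> sig ` {1..2*n}"
  proof
    fix y assume "y \<in> X0"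
    thus "y \<in> sig ` {1..2*n}" using sig_rho[of y] by (metis image_eqI)
  qed
qed

lemma rho_len: "x\<in>X0 \<Longrightarrow> y\<in>X0 \<Longrightarrow> x<y \<Longrightarrow> n-m+1 \<le> y-x \<Longrightarrow> rho x < rho y \<and> n-m \<le> rho y - rho x"
  using m3 npos unfolding rho_def X0_def by auto

lemma sig_len: "x\<in>{1..2*n} \<Longrightarrow> y\<in>{1..2*n} \<Longrightarrow> x<y \<Longrightarrow> n-m \<le> y-x \<Longrightarrow> sig x < sig y \<and> n-m+1 \<le> sig y - sig x"
  using m3 npos unfolding sig_def by auto


lemma struct:
  assumes D: "D \<in> K (n-m+1) (n+1)"
  shows "{partner D t0, t0} \<in> D" "{a0, partner D a0} \<in> D" "1 \<le> partner D t0" "partner D t0 \<le> a0"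
    "t0 \<le> partner D a0" "partner D a0 \<le> 2*n+2" "partner D t0 = a0 \<longleftrightarrow> partner D a0 = t0"
    "{a0,t0} \<in> D \<longleftrightarrow> partner D t0 = a0"
proof -
  have pm: "pm {1..2*(n+1)} D" using D K_iff by blast
  have a: "a0 \<in> {1..2*(n+1)}" "t0 \<in> {1..2*(n+1)}" using m3 npos by auto
  note Pa = K_partner[OF D a(1)] and Pt = K_partner[OF D a(2)]
  show "{partner D t0, t0} \<in> D" using pm_partner[OF pm a(2)] by (simp add: insert_commute)
  show "{a0, partner D a0} \<in> D" using pm_partner[OF pm a(1)] .
  show "1 \<le> partner D t0" using Pt by simp
  show "partner D a0 \<le> 2*n+2" using Pa by simp
  show st: "partner D t0 \<le> a0"
  proof -
    have "\<not> t0 < partner D t0" using Pt m3 by auto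
    hence "partner D t0 < t0" using Pt by simp
    thus ?thesis using Pt m3 by auto
  qed
  show "t0 \<le> partner D a0"
  proof -
    have "\<not> partner D a0 < a0" using Pa m3 by auto
    hence "a0 < partner D a0" using Pa by (meson linorder_neqE_nat)
    thus ?thesis using Pa m3 by auto
  qed
  show "partner D t0 = a0 \<longleftrightarrow> partner D a0 = t0" using Pa Pt by metis
  show "{a0,t0} \<in> D \<longleftrightarrow> partner D t0 = a0"
  proof
    assume "{a0,t0} \<in> D" hence "{t0,a0} \<in> D" by (simp add: insert_commute)
    thus "partner D t0 = a0" using pm_partner_eq[OF pm] by blast
  next
    assume "partner D t0 = a0" thus "{a0,t0} \<in> D" using \<open>{partner D t0, t0} \<in> D\<close> by simp
  qed
qed

definition Dpp :: "nat set set \<Rightarrow> nat set set" where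
  "Dpp D = (if {a0,t0} \<in> D then D - {{a0,t0}}
     else insert {partner D t0, partner D a0} (D - {{partner D t0, t0}, {a0, partner D a0}}))"

definition phi :: "nat set set \<Rightarrow> nat set set" where "phi D = (`) rho ` Dpp D"

lemma Dpp_ok:
  assumes D: "D \<in> K (n-m+1) (n+1)"
  shows "pm X0 (Dpp D) \<and> (\<forall>a b. {a,b} \<in> Dpp D \<longrightarrow> a<b \<longrightarrow> n-m+1 \<le> b-a)"
proof -
  have pm: "pm {1..2*(n+1)} D" and len: "\<forall>a b. {a,b} \<in> D \<longrightarrow> a<b \<longrightarrow> n-m+1 \<le> b-a"
    using D K_iff by blast+
  note st = struct[OF D]
  show ?thesis
  proof (cases "{a0,t0} \<in> D")
    case True
    have "Dpp D = D - {{a0,t0}}" using True unfolding Dpp_def by simp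
    moreover have "pm X0 (D - {{a0,t0}})" using pm_remove[OF pm True] unfolding X0_def .
    ultimately show ?thesis using len by auto
  next
    case False
    define s0 where "s0 = partner D t0"
    define t1 where "t1 = partner D a0"
    have s0: "1 \<le> s0" "s0 < a0" using st False unfolding s0_def by auto
    have t1: "t0 < t1" "t1 \<le> 2*n+2" using st False unfolding t1_def by (auto simp: le_neq_implies_less)
    have E: "Dpp D = insert {s0,t1} (D - {{s0,t0}} - {{a0,t1}})" using False unfolding Dpp_def s0_def t1_def by auto
    have c1: "{s0,t0} \<in> D" "{a0,t1} \<in> D" using st unfolding s0_def t1_def by auto
    have p1: "pm ({1..2*(n+1)} - {s0,t0}) (D - {{s0,t0}})" using pm_remove[OF pm c1(1)] .
    have "{a0,t1} \<in> D - {{s0,t0}}" using c1 s0 t1 by (auto simp: doubleton_eq_iff)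
    from pm_remove[OF p1 this] have p2: "pm ({1..2*(n+1)} - {s0,t0} - {a0,t1}) (D - {{s0,t0}} - {{a0,t1}})" .
    have p3: "pm ({1..2*(n+1)} - {s0,t0} - {a0,t1} \<union> {s0,t1}) (Dpp D)"
      unfolding E by (rule pm_insert[OF p2]) (use s0 t1 in auto)
    have "{1..2*(n+1)} - {s0,t0} - {a0,t1} \<union> {s0,t1} = X0" unfolding X0_def using s0 t1 m3 by auto
    hence "pm X0 (Dpp D)" using p3 by simp
    moreover have "\<forall>a b. {a,b} \<in> Dpp D \<longrightarrow> a<b \<longrightarrow> n-m+1 \<le> b-a"
    proof (intro allI impI)
      fix a b assume ab: "{a,b} \<in> Dpp D" "a < b"
      show "n-m+1 \<le> b-a"
      proof (cases "{a,b} = {s0,t1}")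
        case True
        hence "a = s0 \<and> b = t1" using ordered_eq[OF ab(2), of s0 t1] s0 t1 by simp
        thus ?thesis using s0 t1 by simp
      next
        case False thus ?thesis using ab E len by auto
      qed
    qed
    ultimately show ?thesis by blast
  qed
qed

lemma phi_K: assumes D: "D \<in> K (n-m+1) (n+1)" shows "phi D \<in> K (n-m) n"
proof -
  have A: "pm X0 (Dpp D)" "\<forall>a b. {a,b} \<in> Dpp D \<longrightarrow> a<b \<longrightarrow> n-m+1 \<le> b-a" using Dpp_ok[OF D] by auto
  have "pm {1..2*n} (phi D)" unfolding phi_def using pm_image[OF A(1) inj_rho] rho_img by simp
  moreover have "\<forall>a b. {a,b} \<in> phi D \<longrightarrow> a<b \<longrightarrow> n-m \<le> b-a"
    unfolding phi_def by (rule img_len[OF A]) (use rho_len in auto)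
  ultimately show ?thesis using K_iff by blast
qed


lemma sigD:
  assumes D: "D \<in> K (n-m) n"
  shows "pm X0 ((`) sig ` D)" "\<forall>a b. {a,b} \<in> (`) sig ` D \<longrightarrow> a<b \<longrightarrow> n-m+1 \<le> b-a"
proof -
  have pm: "pm {1..2*n} D" and len: "\<forall>a b. {a,b} \<in> D \<longrightarrow> a<b \<longrightarrow> n-m \<le> b-a" using D K_iff by blast+
  show "pm X0 ((`) sig ` D)" using pm_image[OF pm inj_sig] sig_img by simp
  show "\<forall>a b. {a,b} \<in> (`) sig ` D \<longrightarrow> a<b \<longrightarrow> n-m+1 \<le> b-a"
    by (rule img_len[OF pm len]) (use sig_len in auto)
qed

definition Psi :: "nat set set \<Rightarrow> nat \<Rightarrow> nat set set" where
  "Psi D s = (if s = a0 then insert {a0,t0} ((`) sig ` D)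
     else insert {s,t0} (insert {a0, sig (partner D s)} ((`) sig ` D - {{s, sig (partner D s)}})))"

definition Ch :: "nat set set \<Rightarrow> nat set" where
  "Ch D = insert a0 {s\<in>{1..2*m}. n+m+1 \<le> partner D s}"

lemma Psi_K:
  assumes D: "D \<in> K (n-m) n" and s: "s \<in> Ch D"
  shows "Psi D s \<in> K (n-m+1) (n+1)"
proof -
  note sd = sigD[OF D]
  have pm: "pm {1..2*n} D" using D K_iff by blast
  have U: "X0 \<union> {a0,t0} = {1..2*(n+1)}" unfolding X0_def using m3 by auto
  show ?thesis
  proof (cases "s = a0")
    case True
    have "pm (X0 \<union> {a0,t0}) (insert {a0,t0} ((`) sig ` D))"
      by (rule pm_insert[OF sd(1)]) (use m3 in \<open>auto simp: X0_def\<close>)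
    hence "pm {1..2*(n+1)} (Psi D s)" using True U unfolding Psi_def by simp
    moreover have "\<forall>a b. {a,b} \<in> Psi D s \<longrightarrow> a<b \<longrightarrow> n-m+1 \<le> b-a"
    proof (intro allI impI)
      fix a b assume ab: "{a,b} \<in> Psi D s" "a < b"
      show "n-m+1 \<le> b-a"
      proof (cases "{a,b} = {a0,t0}")
        case True
        hence "a = a0 \<and> b = t0" using ordered_eq[OF ab(2), of a0 t0] m3 by simp
        thus ?thesis using m3 by simp
      next
        case False
        have "Psi D s = insert {a0,t0} ((`) sig ` D)" using \<open>s = a0\<close> unfolding Psi_def by simp
        hence "{a,b} \<in> (`) sig ` D" using ab(1) False by simp
        thus ?thesis using sd(2) ab(2) by simp
      qed
    qed
    ultimately show ?thesis using K_iff by blast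
  next
    case False
    define p where "p = partner D s"
    have s1: "1 \<le> s" "s \<le> 2*m" "n+m+1 \<le> p" using s False unfolding Ch_def p_def by auto
    have "s \<in> {1..2*n}" using s1 m3 by auto
    note Ps = K_partner[OF D this]
    have p2: "p \<le> 2*n" using Ps unfolding p_def by simp
    have q: "sig p = p + 2" "sig s = s" unfolding sig_def using s1 m3 by auto
    have c: "{s,p} \<in> D" using pm_partner[OF pm \<open>s \<in> {1..2*n}\<close>] unfolding p_def .
    have "sig ` {s,p} = {s,p+2}" using q by simp
    hence c2: "{s, p+2} \<in> (`) sig ` D" using c by (metis image_eqI)
    have P1: "pm (X0 - {s,p+2}) ((`) sig ` D - {{s,p+2}})" using pm_remove[OF sd(1) c2] .
    have P2: "pm (X0 - {s,p+2} \<union> {a0,p+2}) (insert {a0,p+2} ((`) sig ` D - {{s,p+2}}))"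
      by (rule pm_insert[OF P1]) (use s1 m3 in \<open>auto simp: X0_def\<close>)
    have P3: "pm (X0 - {s,p+2} \<union> {a0,p+2} \<union> {s,t0}) (insert {s,t0} (insert {a0,p+2} ((`) sig ` D - {{s,p+2}})))"
      by (rule pm_insert[OF P2]) (use s1 m3 in \<open>auto simp: X0_def\<close>)
    have "X0 - {s,p+2} \<union> {a0,p+2} \<union> {s,t0} = {1..2*(n+1)}"
      using s1 p2 m3 unfolding X0_def by auto
    hence "pm {1..2*(n+1)} (Psi D s)" using P3 False q unfolding Psi_def p_def by simp
    moreover have "\<forall>a b. {a,b} \<in> Psi D s \<longrightarrow> a<b \<longrightarrow> n-m+1 \<le> b-a"
    proof (intro allI impI)
      fix a b assume ab: "{a,b} \<in> Psi D s" "a < b"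
      show "n-m+1 \<le> b-a"
      proof (cases "{a,b} = {s,t0}")
        case True
        hence "a = s \<and> b = t0" using ordered_eq[OF ab(2), of s t0] s1 m3 by simp
        thus ?thesis using s1 m3 by simp
      next
        case F1: False
        show ?thesis
        proof (cases "{a,b} = {a0,p+2}")
          case True
          hence "a = a0 \<and> b = p+2" using ordered_eq[OF ab(2), of a0 "p+2"] s1 m3 by simp
          thus ?thesis using s1 m3 by simp
        next
          case False
          have "Psi D s = insert {s,t0} (insert {a0,p+2} ((`) sig ` D - {{s,p+2}}))"
            using \<open>s \<noteq> a0\<close> q unfolding Psi_def p_def by simp
          hence "{a,b} \<in> (`) sig ` D" using ab(1) F1 False by simp
          thus ?thesis using sd(2) ab(2) by simp
        qed
      qed
    qed
    ultimately show ?thesis using K_iff by blast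
  qed
qed


lemma partner_phi:
  assumes D: "D \<in> K (n-m+1) (n+1)" and F: "{a0,t0} \<notin> D"
  shows "partner (phi D) (partner D t0) = partner D a0 - 2" "n+m+3 \<le> partner D a0"
    "Dpp D = insert {partner D t0, partner D a0} (D - {{partner D t0, t0}} - {{a0, partner D a0}})"
proof -
  note st = struct[OF D]
  define s0 where "s0 = partner D t0"
  define t1 where "t1 = partner D a0"
  have s0: "1 \<le> s0" "s0 < a0" using st F unfolding s0_def by auto
  have t1: "t0 < t1" "t1 \<le> 2*n+2" using st F unfolding t1_def by (auto simp: le_neq_implies_less)
  show "n+m+3 \<le> partner D a0" using t1 unfolding t1_def by simp
  show E: "Dpp D = insert {partner D t0, partner D a0} (D - {{partner D t0, t0}} - {{a0, partner D a0}})"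
    using F unfolding Dpp_def by auto
  have "{s0,t1} \<in> Dpp D" using E unfolding s0_def t1_def by simp
  moreover have "rho ` {s0,t1} = {s0, t1 - 2}" using s0 t1 unfolding rho_def by auto
  ultimately have "{s0, t1-2} \<in> phi D" unfolding phi_def by (metis image_eqI)
  moreover have "pm {1..2*n} (phi D)" using phi_K[OF D] K_iff by blast
  ultimately show "partner (phi D) (partner D t0) = partner D a0 - 2"
    using pm_partner_eq unfolding s0_def t1_def by blast
qed

lemma Phi_into: assumes D: "D \<in> K (n-m+1) (n+1)" shows "partner D t0 \<in> Ch (phi D)"
proof (cases "{a0,t0} \<in> D")
  case True thus ?thesis using struct[OF D] unfolding Ch_def by simp
next
  case False
  note st = struct[OF D] and pp = partner_phi[OF D False]
  have "partner D t0 \<noteq> a0" using st False by simp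
  hence "partner D t0 \<in> {1..2*m}" using st by auto
  thus ?thesis using pp unfolding Ch_def by auto
qed

lemma left_inv: assumes D: "D \<in> K (n-m+1) (n+1)" shows "Psi (phi D) (partner D t0) = D"
proof -
  have A: "pm X0 (Dpp D)" using Dpp_ok[OF D] by blast
  have bk: "(`) sig ` phi D = Dpp D" unfolding phi_def by (rule img_img[OF A]) (simp add: sig_rho)
  note st = struct[OF D]
  show ?thesis
  proof (cases "{a0,t0} \<in> D")
    case True
    have "Dpp D = D - {{a0,t0}}" using True unfolding Dpp_def by simp
    thus ?thesis using True st bk unfolding Psi_def by (simp add: insert_absorb)
  next
    case False
    note pp = partner_phi[OF D False]
    define s0 where "s0 = partner D t0"
    define t1 where "t1 = partner D a0"
    have pm: "pm {1..2*(n+1)} D" using D K_iff by blast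
    have ne: "s0 \<noteq> a0" using st False unfolding s0_def by simp
    have sg: "sig (t1 - 2) = t1" using pp(2) unfolding sig_def t1_def by auto
    have c1: "{s0,t0} \<in> D" "{a0,t1} \<in> D" using st unfolding s0_def t1_def by auto
    have "t1 \<noteq> t0" using pp(2) unfolding t1_def by simp
    have notin: "{s0,t1} \<notin> D"
    proof
      assume "{s0,t1} \<in> D"
      hence "partner D s0 = t1" using pm_partner_eq[OF pm] by blast
      moreover have "partner D s0 = t0" using pm_partner_eq[OF pm c1(1)] .
      ultimately show False using \<open>t1 \<noteq> t0\<close> by simp
    qed
    have "Psi (phi D) s0 = insert {s0,t0} (insert {a0, t1} (Dpp D - {{s0, t1}}))"
      using ne bk pp(1) sg unfolding Psi_def s0_def t1_def by simp
    also have "\<dots> = D" using swap_back[OF c1 notin] pp(3) unfolding s0_def t1_def by simp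
    finally show ?thesis unfolding s0_def .
  qed
qed

lemma right_inv:
  assumes D: "D \<in> K (n-m) n" and s: "s \<in> Ch D"
  shows "partner (Psi D s) t0 = s \<and> phi (Psi D s) = D"
proof -
  have PK: "Psi D s \<in> K (n-m+1) (n+1)" using Psi_K[OF D s] .
  have pmP: "pm {1..2*(n+1)} (Psi D s)" using PK K_iff by blast
  have pm: "pm {1..2*n} D" using D K_iff by blast
  note sd = sigD[OF D]
  have fwd: "(`) rho ` ((`) sig ` D) = D" by (rule img_img[OF pm]) (simp add: rho_sig)
  have sP: "{s,t0} \<in> Psi D s" unfolding Psi_def by auto
  hence pt: "partner (Psi D s) t0 = s" using pm_partner_eq[OF pmP, of t0 s] by (simp add: insert_commute)
  have nX: "\<And>c. c \<in> (`) sig ` D \<Longrightarrow> c \<subseteq> X0" using chords_sub[OF sd(1)] .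
  show ?thesis
  proof (cases "s = a0")
    case True
    have "{a0,t0} \<notin> (`) sig ` D" using nX unfolding X0_def by blast
    hence "Dpp (Psi D s) = (`) sig ` D" using True unfolding Dpp_def Psi_def by simp
    thus ?thesis using pt fwd unfolding phi_def by simp
  next
    case False
    define p where "p = partner D s"
    have s1: "1 \<le> s" "s \<le> 2*m" "n+m+1 \<le> p" using s False unfolding Ch_def p_def by auto
    have q: "sig p = p + 2" "sig s = s" unfolding sig_def using s1 m3 by auto
    have "s \<in> {1..2*n}" using s1 m3 by auto
    have c: "{s,p} \<in> D" using pm_partner[OF pm \<open>s \<in> {1..2*n}\<close>] unfolding p_def .
    have "sig ` {s,p} = {s,p+2}" using q by simp
    hence c2: "{s, p+2} \<in> (`) sig ` D" using c by (metis image_eqI)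
    have PE: "Psi D s = insert {s,t0} (insert {a0,p+2} ((`) sig ` D - {{s,p+2}}))"
      using False q unfolding Psi_def p_def by simp
    have "{a0,p+2} \<in> Psi D s" using PE by simp
    hence pa: "partner (Psi D s) a0 = p+2" using pm_partner_eq[OF pmP] by blast
    have "{a0,t0} \<notin> Psi D s" using struct(8)[OF PK] pt False by simp
    hence "Dpp (Psi D s) = insert {s,p+2} (Psi D s - {{s,t0},{a0,p+2}})"
      unfolding Dpp_def using pt pa by simp
    also have "\<dots> = (`) sig ` D" unfolding PE
    proof (rule swap_fwd[OF _ _ _ c2])
      show "{s,t0} \<notin> (`) sig ` D" using nX unfolding X0_def by blast
      show "{a0,p+2} \<notin> (`) sig ` D" using nX unfolding X0_def by blast
      show "{s,t0} \<noteq> {a0,p+2}" using s1 by (auto simp: doubleton_eq_iff)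
    qed
    finally show ?thesis using pt fwd unfolding phi_def by simp
  qed
qed


lemma card_Ch: assumes D: "D \<in> K (n-m) n" shows "card (Ch D) = m + 1"
proof -
  define p where "p = partner D"
  have P: "\<And>x. x \<in> {1..2*n} \<Longrightarrow> p x \<in> {1..2*n} \<and> p x \<noteq> x \<and> p (p x) = x
     \<and> (x < p x \<longrightarrow> x + (n-m) \<le> p x) \<and> (p x < x \<longrightarrow> p x + (n-m) \<le> x)"
    using K_partner[OF D] unfolding p_def by blast
  define Y where "Y = {n+m+1..2*n}"
  define I where "I = {1..n+m}"
  define Z where "Z = {x\<in>I. p x \<in> Y}"
  define W where "W = {x\<in>I. p x \<notin> Y}"
  define H where "H = {s\<in>{1..2*m}. p s \<notin> Y}"
  define H' where "H' = {x\<in>{2*m+1..n+m}. p x \<notin> Y}"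
  have "p ` Y = Z"
  proof
    show "p ` Y \<subseteq> Z"
    proof
      fix z assume "z \<in> p ` Y"
      then obtain y where y: "y \<in> Y" "z = p y" by blast
      hence yr: "y \<in> {1..2*n}" unfolding Y_def by auto
      have "\<not> y < p y" using P[OF yr] y m3 unfolding Y_def by auto
      hence "p y < y" using P[OF yr] by (meson linorder_neqE_nat)
      hence "p y \<in> I" using P[OF yr] y m3 unfolding Y_def I_def by auto
      thus "z \<in> Z" using P[OF yr] y unfolding Z_def by auto
    qed
    show "Z \<subseteq> p ` Y"
    proof
      fix x assume x: "x \<in> Z"
      hence "x \<in> {1..2*n}" unfolding Z_def I_def using m3 by auto
      hence "x = p (p x)" using P by simp
      thus "x \<in> p ` Y" using x unfolding Z_def by blast
    qed
  qed
  moreover have "inj_on p Y"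
    by (rule inj_on_inverseI[where g=p]) (use P in \<open>auto simp: Y_def\<close>)
  ultimately have cZ: "card Z = n - m" using card_image unfolding Y_def by fastforce
  have "Z \<union> W = I" "Z \<inter> W = {}" unfolding Z_def W_def by auto
  hence "card Z + card W = n + m" using card_Un_disjoint[of Z W] unfolding I_def
    by (metis card_atLeastAtMost diff_Suc_1 finite_Un finite_atLeastAtMost)
  hence cW: "card W = 2*m" using cZ m3 by simp
  have "W = H \<union> H'" unfolding W_def H_def H'_def I_def using m3 by auto
  moreover have "H \<inter> H' = {}" unfolding H_def H'_def by auto
  ultimately have cHH: "card H + card H' = 2*m" using cW card_Un_disjoint[of H H'] unfolding H_def H'_def by simp
  have "p ` H = H'"
  proof
    show "p ` H \<subseteq> H'"
    proof
      fix z assume "z \<in> p ` H"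
      then obtain s where s: "s \<in> H" "z = p s" by blast
      hence sr: "s \<in> {1..2*n}" unfolding H_def using m3 by auto
      have "\<not> p s < s" using P[OF sr] s m3 unfolding H_def by auto
      hence "s < p s" using P[OF sr] by (meson linorder_neqE_nat)
      hence "p s \<in> {2*m+1..n+m}" using P[OF sr] s m3 unfolding H_def Y_def by auto
      moreover have "p (p s) \<notin> Y" using P[OF sr] s m3 unfolding H_def Y_def by auto
      ultimately show "z \<in> H'" using s unfolding H'_def by auto
    qed
    show "H' \<subseteq> p ` H"
    proof
      fix x assume x: "x \<in> H'"
      hence xr: "x \<in> {1..2*n}" unfolding H'_def using m3 by auto
      have "\<not> x < p x" using P[OF xr] x m3 unfolding H'_def Y_def by auto
      hence "p x < x" using P[OF xr] by (meson linorder_neqE_nat)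
      hence "p x \<in> {1..2*m}" using P[OF xr] x m3 unfolding H'_def by auto
      moreover have "p (p x) \<notin> Y" using P[OF xr] x unfolding H'_def Y_def by auto
      ultimately have "p x \<in> H" unfolding H_def by auto
      moreover have "x = p (p x)" using P[OF xr] by simp
      ultimately show "x \<in> p ` H" by blast
    qed
  qed
  moreover have "inj_on p H"
    by (rule inj_on_inverseI[where g=p]) (use P m3 in \<open>auto simp: H_def\<close>)
  ultimately have "card H' = card H" using card_image by fastforce
  hence cH: "card H = m" using cHH by simp
  have G: "{s\<in>{1..2*m}. n+m+1 \<le> partner D s} = {1..2*m} - H"
  proof -
    have "\<And>s. s \<in> {1..2*m} \<Longrightarrow> p s \<le> 2*n" using P m3 by auto
    thus ?thesis unfolding H_def Y_def p_def by auto
  qed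
  have "H \<subseteq> {1..2*m}" unfolding H_def by auto
  hence "card ({1..2*m} - H) = card {1..2*m} - card H" by (intro card_Diff_subset) (auto intro: finite_subset)
  hence "card ({1..2*m} - H) = m" using cH by simp
  hence "card {s\<in>{1..2*m}. n+m+1 \<le> partner D s} = m" using G by simp
  moreover have "a0 \<notin> {s\<in>{1..2*m}. n+m+1 \<le> partner D s}" by simp
  ultimately show ?thesis unfolding Ch_def by simp
qed

lemma main: "card (K (n-m+1) (n+1)) = (m+1) * card (K (n-m) n)"
proof -
  have "bij_betw (\<lambda>D. (phi D, partner D t0)) (K (n-m+1) (n+1)) (Sigma (K (n-m) n) Ch)"
  proof (rule bij_betw_byWitness[where f'="\<lambda>(D,s). Psi D s"])
    show "\<forall>a\<in>K (n-m+1) (n+1). (\<lambda>(D,s). Psi D s) (phi a, partner a t0) = a" using left_inv by simp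
    show "\<forall>a'\<in>Sigma (K (n-m) n) Ch. (\<lambda>D. (phi D, partner D t0)) ((\<lambda>(D,s). Psi D s) a') = a'"
      using right_inv by auto
    show "(\<lambda>D. (phi D, partner D t0)) ` K (n-m+1) (n+1) \<subseteq> Sigma (K (n-m) n) Ch"
      using phi_K Phi_into by auto
    show "(\<lambda>(D,s). Psi D s) ` Sigma (K (n-m) n) Ch \<subseteq> K (n-m+1) (n+1)"
      using Psi_K by auto
  qed
  hence "card (K (n-m+1) (n+1)) = card (Sigma (K (n-m) n) Ch)" by (rule bij_betw_same_card)
  also have "\<dots> = (\<Sum>D\<in>K (n-m) n. card (Ch D))"
    by (rule card_SigmaI) (auto simp: finite_K Ch_def)
  also have "\<dots> = (\<Sum>D\<in>K (n-m) n. m+1)" using card_Ch by simp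
  finally show ?thesis by simp
qed

end

theorem theorem1:
  fixes n k :: nat
  assumes "0 < n" and "0 < k" and "int n \<ge> 3 * (int n - int k)" and "n \<ge> k"
  shows "card (K (k+1) (n+1)) = (n - k + 1) * card (K k n)"
proof -
  interpret S n "n-k" using assms by unfold_locales auto
  have "n - (n-k) = k" using assms by simp
  thus ?thesis using main by simp
qed

end
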